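(* Let $\alpha,\beta\ge 1$ be real numbers and let $w$ be a random variable with the Beta distribution with parameters $\alpha,\beta$, i.e. with density proportional to $x^{\alpha-1}(1-x)^{\beta-1}$ on $[0,1]$. Let $\mu=\alpha/(\alpha+\beta)$ be the mean of $w$. Then $\mathbb{E}[\min(\mu,w)]\ge \mu(1-1/e)$. *)

theory Defs
  imports "HOL-Probability.Probability"
begin

text \<open>Density of the Beta(a,b) distribution on the real line w.r.t. Lebesgue measure:
  x^(a-1) (1-x)^(b-1) / B(a,b) on the open interval (0,1), zero elsewhere
  (the endpoints form a null set).\<close>
definition beta_density :: "real \<Rightarrow> real \<Rightarrow> real \<Rightarrow> ennreal" where
  "beta_density a b x =
     ennreal (indicator {0<..<1} x * x powr (a - 1) * (1 - x) powr (b - 1) / Beta a b)"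

end

theory Submission
  imports Defs
begin


lemma bern_powr:
  fixes t a :: real
  assumes "t > 0" "a \<ge> 1"
  shows "1 - t powr a \<le> a * (1 - t)"
proof -
  have "a * (t - 1) \<le> t powr a - 1 powr a"
    using assms by (intro convex_on_imp_above_tangent[where A = "{0<..}"] powr_convex)
       (auto intro!: derivative_eq_intros simp: interior_open)
  thus ?thesis by (simp add: algebra_simps)
qed

lemma right_bound:
  fixes a b m :: real
  assumes a: "a \<ge> 1" and b: "b \<ge> 1" and m: "0 < m" "m \<le> 1"
  assumes int: "(\<lambda>x. x powr (a-1) * (1-x) powr (b-1)) integrable_on {m..1}"
  shows "m powr (a-1) * (1-m) powr b / b \<le> integral {m..1} (\<lambda>x. x powr (a-1) * (1-x) powr (b-1))"
proof -
  define H where "H = (\<lambda>x::real. - (x powr (a-1) * (1-x) powr b) / b)"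
  define l where "l = (\<lambda>x::real. x powr (a-1) * (1-x) powr (b-1) - (a-1)/b * x powr (a-2) * (1-x) powr b)"
  have cont: "continuous_on {m..1} H"
    unfolding H_def using a b m
    by (intro continuous_intros continuous_on_powr') (auto)
  have der: "(H has_vector_derivative l x) (at x)" if x: "x \<in> {m<..<1}" for x
  proof -
    have "(H has_real_derivative (- ((a-1) * x powr (a-1-1) * (1-x) powr b - b * (1-x) powr (b-1) * x powr (a-1)) / b)) (at x)"
      unfolding H_def using x a b m by (auto intro!: derivative_eq_intros simp: field_simps)
    moreover have "- ((a-1) * x powr (a-1-1) * (1-x) powr b - b * (1-x) powr (b-1) * x powr (a-1)) / b = l x"
      unfolding l_def using b by (simp add: field_simps)
    ultimately show ?thesis by (simp add: has_real_derivative_iff_has_vector_derivative)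
  qed
  have hi: "(l has_integral (H 1 - H m)) {m..1}"
    using m by (intro fundamental_theorem_of_calculus_interior cont der) auto
  have le: "l x \<le> x powr (a-1) * (1-x) powr (b-1)" if "x \<in> {m..1}" for x
  proof -
    have "0 \<le> (a-1)/b * x powr (a-2) * (1-x) powr b" using a b by auto
    thus ?thesis unfolding l_def by simp
  qed
  have "H 1 - H m \<le> integral {m..1} (\<lambda>x. x powr (a-1) * (1-x) powr (b-1))"
    using has_integral_le[OF hi integrable_integral[OF int] le] by simp
  moreover have "H 1 - H m = m powr (a-1) * (1-m) powr b / b"
    unfolding H_def using b by simp
  ultimately show ?thesis by simp
qed



lemma pointwise_left:
  fixes a b x m :: real
  assumes a: "a \<ge> 1" and b: "b \<ge> 1" and x: "0 < x" "x \<le> m"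
    and m0: "0 < m" "m < 1" and mab: "b * m = a * (1 - m)"
  shows "(1 - m) powr b * exp ((1-m) * (1 - (x/m) powr a)) \<le> (1-x) powr (b-1)"
proof -
  have xm: "x < 1" using x m0 by auto
  have t: "1 - (x/m) powr a \<le> a * (1 - x/m)"
    using bern_powr[of "x/m" a] x m0 a by auto
  have s1: "(1-m) * (1 - (x/m) powr a) \<le> b * (m - x)"
  proof -
    have "(1-m) * (1 - (x/m) powr a) \<le> (1-m) * (a * (1 - x/m))"
      using t m0 by (intro mult_left_mono) auto
    also have "\<dots> = (a * (1-m)) * (1 - x/m)" by simp
    also have "\<dots> = b * (m - x)" unfolding mab[symmetric] using m0 by (simp add: field_simps)
    finally show ?thesis .
  qed
  have s2: "m - x \<le> ln (1-x) - ln (1-m)"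
  proof -
    have "ln ((1-m)/(1-x)) \<le> (1-m)/(1-x) - 1"
      using m0 xm by (intro ln_le_minus_one) auto
    also have "\<dots> = - ((m - x)/(1-x))" using xm by (simp add: field_simps)
    also have "\<dots> \<le> - (m - x)"
      using xm x by (simp add: field_simps mult_left_le_one_le)
    finally show ?thesis using m0 xm by (simp add: ln_div)
  qed
  have "(1-m) powr b * exp ((1-m) * (1 - (x/m) powr a)) = exp (b * ln (1-m) + (1-m) * (1 - (x/m) powr a))"
    using m0 by (simp add: powr_def exp_add)
  also have "\<dots> \<le> exp (b * ln (1-x))"
  proof -
    have "b * (m - x) \<le> b * (ln (1-x) - ln (1-m))" using s2 b by (intro mult_left_mono) auto
    thus ?thesis using s1 by (simp add: algebra_simps)
  qed
  also have "\<dots> = (1-x) powr b" using xm by (simp add: powr_def)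
  also have "\<dots> \<le> (1-x) powr (b-1)"
    using xm x by (intro powr_mono') auto
  finally show ?thesis .
qed



lemma left_bound:
  fixes a b m :: real
  assumes a: "a \<ge> 1" and b: "b \<ge> 1"
    and m0: "0 < m" "m < 1" and mab: "b * m = a * (1 - m)"
  assumes int: "(\<lambda>x. x powr (a-1) * (1-x) powr (b-1)) integrable_on {0..m}"
  shows "m powr a * (1-m) powr b * (exp (1-m) - 1) / (a * (1-m))
           \<le> integral {0..m} (\<lambda>x. x powr (a-1) * (1-x) powr (b-1))"
proof -
  define K where "K = m powr a * (1-m) powr b / (a * (1-m))"
  define H where "H = (\<lambda>x::real. - K * exp ((1-m) * (1 - (x/m) powr a)))"
  define l where "l = (\<lambda>x::real. x powr (a-1) * (1-m) powr b * exp ((1-m) * (1 - (x/m) powr a)))"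
  have cont: "continuous_on {0..m} H"
    unfolding H_def using a b m0
    by (intro continuous_intros continuous_on_powr') (auto)
  have der: "(H has_vector_derivative l x) (at x)" if x: "x \<in> {0<..<m}" for x
  proof -
    have "(H has_real_derivative (- K * (exp ((1-m) * (1 - (x/m) powr a)) * ((1-m) * (- (a * (x/m) powr (a-1) * (1/m))))))) (at x)"
      unfolding H_def using x a b m0 by (auto intro!: derivative_eq_intros simp: field_simps)
    moreover have "- K * (exp ((1-m) * (1 - (x/m) powr a)) * ((1-m) * (- (a * (x/m) powr (a-1) * (1/m))))) = l x"
    proof -
      have e1: "(x/m) powr (a-1) = x powr (a-1) / m powr (a-1)" using x m0 by (simp add: powr_divide)
      have e2: "m powr a = m * m powr (a-1)" using m0 by (simp add: powr_diff)
      have "m powr (a-1) > 0" using m0 by simp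
      thus ?thesis unfolding l_def K_def e1 e2 using m0 a by (simp add: field_simps)
    qed
    ultimately show ?thesis by (simp add: has_real_derivative_iff_has_vector_derivative)
  qed
  have hi: "(l has_integral (H m - H 0)) {0..m}"
    using m0 by (intro fundamental_theorem_of_calculus_interior cont der) auto
  have le: "l x \<le> x powr (a-1) * (1-x) powr (b-1)" if "x \<in> {0..m}" for x
  proof (cases "x = 0")
    case True thus ?thesis by (simp add: l_def)
  next
    case False
    hence x: "0 < x" "x \<le> m" using that by auto
    have "x powr (a-1) * ((1-m) powr b * exp ((1-m) * (1 - (x/m) powr a))) \<le> x powr (a-1) * (1-x) powr (b-1)"
      by (intro mult_left_mono pointwise_left[OF a b x m0 mab]) auto
    thus ?thesis by (simp add: l_def mult.assoc)
  qed
  have "H m - H 0 \<le> integral {0..m} (\<lambda>x. x powr (a-1) * (1-x) powr (b-1))"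
    using has_integral_le[OF hi integrable_integral[OF int] le] by simp
  moreover have "H m - H 0 = K * (exp (1-m) - 1)"
    unfolding H_def using m0 a by (simp add: algebra_simps)
  ultimately show ?thesis by (simp add: K_def)
qed



lemma deriv_phi:
  fixes a b x :: real
  assumes "0 < x" "x < 1" "a > 0" "b > 0"
  shows "((\<lambda>x. x powr a * (1-x) powr b) has_real_derivative
          ((a+b)*(a/(a+b) - x) * (x powr (a-1) * (1-x) powr (b-1)))) (at x)"
proof -
  have e1: "x powr a = x * x powr (a-1)" using assms by (simp add: powr_diff)
  have e2: "(1-x) powr b = (1-x) * (1-x) powr (b-1)" using assms by (simp add: powr_diff)
  have d: "((\<lambda>x. x powr a * (1-x) powr b) has_real_derivative
          (a * x powr (a-1) * (1-x) powr b - b * (1-x) powr (b-1) * x powr a)) (at x)"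
    using assms by (auto intro!: derivative_eq_intros)
  have "a * x powr (a-1) * (1-x) powr b - b * (1-x) powr (b-1) * x powr a
      = (a+b)*(a/(a+b) - x) * (x powr (a-1) * (1-x) powr (b-1))"
    using assms unfolding e1 e2 by (simp add: field_simps)
  with d show ?thesis by simp
qed

lemma mad_integral:
  fixes a b m :: real
  assumes a: "a \<ge> 1" and b: "b \<ge> 1" and m0: "0 < m" "m < 1" and mdef: "m = a/(a+b)"
  shows "((\<lambda>x. (m - x) * (x powr (a-1) * (1-x) powr (b-1))) has_integral
            (m powr a * (1-m) powr b / (a+b))) {0..m}"
proof -
  define F where "F = (\<lambda>x::real. x powr a * (1-x) powr b / (a+b))"
  have cont: "continuous_on {0..m} F"
    unfolding F_def using a b m0
    by (intro continuous_intros continuous_on_powr') (auto)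
  have der: "(F has_vector_derivative ((m - x) * (x powr (a-1) * (1-x) powr (b-1)))) (at x)"
    if x: "x \<in> {0<..<m}" for x
  proof -
    have "(F has_real_derivative ((a+b)*(a/(a+b) - x) * (x powr (a-1) * (1-x) powr (b-1))) / (a+b)) (at x)"
      unfolding F_def using x m0 a b by (intro DERIV_cdivide deriv_phi) auto
    moreover have "(a+b) > 0" using a b by auto
    ultimately show ?thesis unfolding mdef[symmetric]
      by (simp add: has_real_derivative_iff_has_vector_derivative)
  qed
  have "((\<lambda>x. (m - x) * (x powr (a-1) * (1-x) powr (b-1))) has_integral (F m - F 0)) {0..m}"
    using m0 by (intro fundamental_theorem_of_calculus_interior cont der) auto
  moreover have "F m - F 0 = m powr a * (1-m) powr b / (a+b)" unfolding F_def using a by simp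
  ultimately show ?thesis by simp
qed



lemma g_integrable:
  fixes a b :: real
  assumes a: "a \<ge> 1" and b: "b \<ge> 1"
  shows "(\<lambda>x. x powr (a-1) * (1-x) powr (b-1)) integrable_on {0..1}"
proof -
  define ga where "ga = (\<lambda>x::real. if a = 1 then 1 else x powr (a-1))"
  define gb where "gb = (\<lambda>x::real. if b = 1 then 1 else (1-x) powr (b-1))"
  have ca: "continuous_on {0..1} ga"
  proof (cases "a = 1")
    case True thus ?thesis by (simp add: ga_def)
  next
    case False thus ?thesis unfolding ga_def using a
      by (simp, intro continuous_on_powr' continuous_intros) auto
  qed
  have cb: "continuous_on {0..1} gb"
  proof (cases "b = 1")
    case True thus ?thesis by (simp add: gb_def)
  next
    case False thus ?thesis unfolding gb_def using b
      by (simp, intro continuous_on_powr' continuous_intros) auto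
  qed
  have "(\<lambda>x. ga x * gb x) integrable_on {0..1}"
    by (rule integrable_continuous_interval, rule continuous_on_mult[OF ca cb])
  moreover have "\<And>x. x \<in> {0..1} - {0,1} \<Longrightarrow> x powr (a-1) * (1-x) powr (b-1) = ga x * gb x"
    by (auto simp: ga_def gb_def)
  ultimately show ?thesis
    using integrable_spike_finite[of "{0,1::real}" "{0..1}" "\<lambda>x. x powr (a-1) * (1-x) powr (b-1)" "\<lambda>x. ga x * gb x"]
    by simp
qed

lemma key_ineq:
  fixes a b m :: real
  assumes a: "a \<ge> 1" and b: "b \<ge> 1" and mdef: "m = a/(a+b)"
  shows "exp 1 * (m powr a * (1-m) powr b) \<le> a * integral {0..1} (\<lambda>x. x powr (a-1) * (1-x) powr (b-1))"
proof -
  let ?g = "\<lambda>x::real. x powr (a-1) * (1-x) powr (b-1)"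
  have ab: "a + b > 0" using a b by auto
  have m0: "0 < m" "m < 1" using a b ab unfolding mdef by (auto simp: field_simps)
  have mab: "b * m = a * (1 - m)"
  proof -
    have "m * (a+b) = a" unfolding mdef using ab by simp
    thus ?thesis by (simp add: algebra_simps)
  qed
  have int: "?g integrable_on {0..1}" using g_integrable[OF a b] .
  have int1: "?g integrable_on {0..m}" using m0 by (intro integrable_subinterval_real[OF int]) auto
  have int2: "?g integrable_on {m..1}" using m0 by (intro integrable_subinterval_real[OF int]) auto
  have I: "integral {0..m} ?g + integral {m..1} ?g = integral {0..1} ?g"
    using Henstock_Kurzweil_Integration.integral_combine[OF _ _ int, of m] m0 by auto
  define P where "P = m powr a * (1-m) powr b"
  define c where "c = 1 - m"
  have c0: "0 < c" "c < 1" using m0 by (auto simp: c_def)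
  have L: "P * (exp c - 1) / (a * c) \<le> integral {0..m} ?g"
    using left_bound[OF a b m0 mab int1] by (simp add: P_def c_def)
  have R: "m powr (a-1) * (1-m) powr b / b \<le> integral {m..1} ?g"
    using right_bound[OF a b m0(1) _ int2] m0 by simp
  have R': "m powr (a-1) * (1-m) powr b / b = P / (a * c)"
  proof -
    have "m powr a = m * m powr (a-1)" using m0 by (simp add: powr_diff)
    hence P1: "P = m * (m powr (a-1) * (1-m) powr b)" by (simp add: P_def)
    have ac: "a * c = b * m" using mab by (simp add: c_def)
    have "P / (a * c) = (m * (m powr (a-1) * (1-m) powr b)) / (b * m)"
      by (simp only: P1 ac)
    also have "\<dots> = m powr (a-1) * (1-m) powr b / b" using m0 by simp
    finally show ?thesis by simp
  qed
  have "a * integral {0..1} ?g \<ge> a * (P * (exp c - 1) / (a * c) + P / (a * c))"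
    using L R R' I a by (intro mult_left_mono) auto
  also have "a * (P * (exp c - 1) / (a * c) + P / (a * c)) = P * exp c / c"
    using a c0 by (simp add: field_simps)
  finally have A: "P * exp c / c \<le> a * integral {0..1} ?g" .
  have "exp 1 * c \<le> exp c"
  proof -
    have "c \<le> exp (c - 1)" using exp_ge_add_one_self[of "c-1"] by simp
    hence "exp 1 * c \<le> exp 1 * exp (c - 1)" by (intro mult_left_mono) auto
    thus ?thesis by (simp add: exp_add[symmetric])
  qed
  moreover have "P \<ge> 0" by (simp add: P_def)
  ultimately have "(exp 1 * c) * P \<le> exp c * P" by (intro mult_right_mono) auto
  hence "exp 1 * P \<le> P * exp c / c"
    using c0 by (simp add: field_simps)
  with A have "exp 1 * P \<le> a * integral {0..1} ?g" by linarith
  thus ?thesis by (simp only: P_def)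
qed



lemma main_aux:
  fixes M :: "'s measure" and w :: "'s \<Rightarrow> real" and \<alpha> \<beta> :: real
  assumes "prob_space M"
    and a: "\<alpha> \<ge> 1" and b: "\<beta> \<ge> 1"
    and dist0: "distributed M lborel w (beta_density \<alpha> \<beta>)"
  shows "prob_space.expectation M (\<lambda>s. min (\<alpha> / (\<alpha> + \<beta>)) (w s))
           \<ge> (\<alpha> / (\<alpha> + \<beta>)) * (1 - 1 / exp 1)"
proof -
  interpret prob_space M by fact
  define m where "m = \<alpha> / (\<alpha> + \<beta>)"
  define B where "B = Beta \<alpha> \<beta>"
  let ?g = "\<lambda>x::real. x powr (\<alpha>-1) * (1-x) powr (\<beta>-1)"
  define fr where "fr = (\<lambda>x::real. indicator {0<..<1} x * x powr (\<alpha>-1) * (1-x) powr (\<beta>-1) / B)"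
  have ab: "\<alpha> + \<beta> > 0" using a b by auto
  have B0: "B > 0" unfolding B_def Beta_def using a b by simp
  have m0: "0 < m" "m < 1" using a b ab unfolding m_def by (auto simp: field_simps)
  have mab: "m * (\<alpha> + \<beta>) = \<alpha>" unfolding m_def using ab by simp
  have dist: "distributed M lborel w (\<lambda>x. ennreal (fr x))"
    using dist0 unfolding beta_density_def fr_def B_def by simp
  have fr_nn: "0 \<le> fr x" for x
    using B0 by (auto simp: fr_def indicator_def)
  have fr_meas: "fr \<in> borel_measurable lborel"
    using distributed_real_measurable[OF _ dist] fr_nn by simp
  have E: "expectation (\<lambda>s. min m (w s)) = (\<integral>x. fr x * min m x \<partial>lborel)"
    using distributed_integral[OF dist, of "\<lambda>x. min m x"] fr_nn by simp
  have int: "?g integrable_on {0..1}" using g_integrable[OF a b] .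
  have int1: "?g integrable_on {0..m}" using m0 by (intro integrable_subinterval_real[OF int]) auto
  have int2: "?g integrable_on {m..1}" using m0 by (intro integrable_subinterval_real[OF int]) auto
  define G where "G = integral {0..1} ?g"
  define I1 where "I1 = integral {0..m} ?g"
  define I2 where "I2 = integral {m..1} ?g"
  define Q where "Q = m powr \<alpha> * (1-m) powr \<beta> / (\<alpha>+\<beta>)"
  have I: "I1 + I2 = G"
    unfolding I1_def I2_def G_def
    using Henstock_Kurzweil_Integration.integral_combine[OF _ _ int, of m] m0 by auto
  have hG: "(?g has_integral G) {0..1}" using int unfolding G_def by (rule integrable_integral)
  have h1: "(?g has_integral I1) {0..m}" using int1 unfolding I1_def by (rule integrable_integral)
  have h2: "(?g has_integral I2) {m..1}" using int2 unfolding I2_def by (rule integrable_integral)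
  have hmad: "((\<lambda>x. (m - x) * ?g x) has_integral Q) {0..m}"
    unfolding Q_def using mad_integral[OF a b m0 m_def] .
  have hl: "((\<lambda>x. min m x * ?g x) has_integral (m * I1 - Q)) {0..m}"
  proof -
    have "((\<lambda>x. m * ?g x - (m - x) * ?g x) has_integral (m * I1 - Q)) {0..m}"
      by (intro has_integral_diff has_integral_mult_right h1 hmad)
    moreover have "m * ?g x - (m - x) * ?g x = min m x * ?g x" if "x \<in> {0..m}" for x
      using that by (simp add: algebra_simps)
    ultimately show ?thesis by (rule has_integral_eq[rotated]) simp
  qed
  have hr: "((\<lambda>x. min m x * ?g x) has_integral (m * I2)) {m..1}"
  proof -
    have "((\<lambda>x. m * ?g x) has_integral (m * I2)) {m..1}"
      by (intro has_integral_mult_right h2)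
    moreover have "m * ?g x = min m x * ?g x" if "x \<in> {m..1}" for x
      using that by simp
    ultimately show ?thesis by (rule has_integral_eq[rotated]) simp
  qed
  have hh: "((\<lambda>x. min m x * ?g x) has_integral (m * G - Q)) {0..1}"
  proof -
    have "((\<lambda>x. min m x * ?g x) has_integral (m * I1 - Q + m * I2)) {0..1}"
      using has_integral_combine[OF _ _ hl hr] m0 by simp
    moreover have "m * I1 - Q + m * I2 = m * G - Q" unfolding I[symmetric] by (simp add: algebra_simps)
    ultimately show ?thesis by simp
  qed
  have spike: "finite {0,1::real}" by simp
  have hU: "((\<lambda>x. fr x * min m x) has_integral ((m * G - Q) / B)) UNIV"
  proof -
    have "((\<lambda>x. min m x * ?g x / B) has_integral ((m * G - Q) / B)) {0..1}"
      using hh by (rule has_integral_divide)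
    hence "((\<lambda>x. if x \<in> {0..1} then min m x * ?g x / B else 0) has_integral ((m * G - Q) / B)) UNIV"
      by (simp only: has_integral_restrict_UNIV)
    thus ?thesis
      by (rule has_integral_spike_finite[OF spike, rotated]) (auto simp: fr_def indicator_def)
  qed
  have hU1: "(fr has_integral (G / B)) UNIV"
  proof -
    have "((\<lambda>x. ?g x / B) has_integral (G / B)) {0..1}"
      using hG by (rule has_integral_divide)
    hence "((\<lambda>x. if x \<in> {0..1} then ?g x / B else 0) has_integral (G / B)) UNIV"
      by (simp only: has_integral_restrict_UNIV)
    thus ?thesis
      by (rule has_integral_spike_finite[OF spike, rotated]) (auto simp: fr_def indicator_def)
  qed
  have nn1: "integral\<^sup>N lborel fr = G / B"
    using nn_integral_has_integral_lborel[OF _ fr_nn hU1] fr_meas by simp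
  have "emeasure M (w -` UNIV \<inter> space M) = (\<integral>\<^sup>+x. ennreal (fr x) * indicator UNIV x \<partial>lborel)"
    by (rule distributed_emeasure[OF dist]) simp
  hence "ennreal (G / B) = 1" using nn1 emeasure_space_1 by simp
  hence GB: "G = B" using B0 by (simp add: field_simps)
  have prod_nn: "0 \<le> fr x * min m x" for x
  proof (cases "x \<in> {0<..<1}")
    case True thus ?thesis using fr_nn[of x] m0 by (intro mult_nonneg_nonneg) auto
  next
    case False thus ?thesis by (simp add: fr_def)
  qed
  have prod_meas: "(\<lambda>x. fr x * min m x) \<in> borel_measurable lborel"
    using fr_meas by measurable
  have v0: "0 \<le> (m * G - Q) / B"
    using has_integral_nonneg[OF hU prod_nn] by simp
  have "(\<integral>x. fr x * min m x \<partial>lborel) = enn2real (\<integral>\<^sup>+x. ennreal (fr x * min m x) \<partial>lborel)"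
    using prod_meas prod_nn by (intro integral_eq_nn_integral) auto
  also have "(\<integral>\<^sup>+x. ennreal (fr x * min m x) \<partial>lborel) = ennreal ((m * G - Q) / B)"
    using nn_integral_has_integral_lborel[OF _ prod_nn hU] prod_meas by simp
  finally have EV: "expectation (\<lambda>s. min m (w s)) = m - Q / B"
    using E v0 GB B0 by (simp add: field_simps)
  have K: "exp 1 * (m powr \<alpha> * (1-m) powr \<beta>) \<le> \<alpha> * B"
    using key_ineq[OF a b m_def] GB unfolding G_def by simp
  have "Q / B \<le> m / exp 1"
  proof -
    have "exp 1 * Q = exp 1 * (m powr \<alpha> * (1-m) powr \<beta>) / (\<alpha> + \<beta>)" by (simp add: Q_def)
    also have "\<dots> \<le> \<alpha> * B / (\<alpha> + \<beta>)" using K ab by (intro divide_right_mono) auto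
    also have "\<alpha> * B / (\<alpha> + \<beta>) = m * B" using mab ab by (simp add: field_simps)
    finally have "exp 1 * Q \<le> m * B" .
    thus ?thesis using B0 by (simp add: field_simps)
  qed
  hence "m * (1 - 1 / exp 1) \<le> expectation (\<lambda>s. min m (w s))"
    unfolding EV by (simp add: algebra_simps)
  thus ?thesis unfolding m_def .
qed

theorem lemma1:
  fixes M :: "'s measure" and w :: "'s \<Rightarrow> real" and \<alpha> \<beta> :: real
  assumes "prob_space M"
    and "\<alpha> \<ge> 1" and "\<beta> \<ge> 1"
    and "distributed M lborel w (beta_density \<alpha> \<beta>)"
  shows "prob_space.expectation M (\<lambda>s. min (\<alpha> / (\<alpha> + \<beta>)) (w s))
           \<ge> (\<alpha> / (\<alpha> + \<beta>)) * (1 - 1 / exp 1)"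
  using main_aux[OF assms] .

end
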